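(* Let $H\in\mathbb{R}^{n\times n}$ and $M\in\mathbb{R}^{m\times m}$ be symmetric positive semidefinite and $A\in\mathbb{R}^{m\times n}$. Let $l$ be an index and $\mathcal{B},\mathcal{N}$ index sets such that $\mathcal{B}$, $\{l\}$, $\mathcal{N}$ are pairwise disjoint with union $\{1,\dots,n\}$. Consider vectors $(\Delta x,\Delta y,\Delta z)\in\mathbb{R}^n\times\mathbb{R}^m\times\mathbb{R}^n$ satisfying \[ H\Delta x-A^T\Delta y-\Delta z=0,\quad A\Delta x+M\Delta y=0,\quad \Delta x_{\mathcal{N}}=0,\quad \Delta z_{\mathcal{B}}=0. \tag{$*$} \] Assume $K_l$ is nonsingular and let $\Delta z_l$ be a given nonnegative scalar. 1. If $\Delta z_l=0$, then the only solution of $( * )$ with this value of $\Delta z_l$ is zero, i.e., $\Delta x_l=0$, $\Delta x_{\mathcal{B}}=0$, $\Delta y=0$, $\Delta z_{\mathcal{N}}=0$. 2. If $\Delta z_l>0$, then the quantities $\Delta x_l,\Delta x_{\mathcal{B}},\Delta y,\Delta z_{\mathcal{N}}$ of a solution of $( * )$ with this value of $\Delta z_l$ are unique and satisfy \[ K_l\begin{pmatrix}\Delta x_l\\ \Delta x_{\mathcal{B}}\\ -\Delta y\end{pmatrix}=\begin{pmatrix}1\\0\\0\end{pmatrix}\Delta z_l,\qquad \Delta z_{\mathcal{N}}=h_{\mathcal{N}l}\Delta x_l+H_{\mathcal{B}\mathcal{N}}^T\Delta x_{\mathcal{B}}-A_{\mathcal{N}}^T\Delta y. \] Moreover, either (i)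 $K_{\mathcal{B}}$ is nonsingular and $\Delta x_l>0$, or (ii) $K_{\mathcal{B}}$ is singular and $\Delta x_l=0$, in which case $\Delta x_{\mathcal{B}}=0$ and the zero eigenvalue of $K_{\mathcal{B}}$ has multiplicity one with corresponding eigenvector $(0,\Delta y)$.
   Context: For index sets $S,T$: $w_S$ is the subvector of $w$ indexed by $S$; $H_{ST}$ is the submatrix of $H$ with rows in $S$ and columns in $T$; $A_S$ is the matrix of columns of $A$ indexed by $S$; $a_l$ is the $l$th column of $A$; $h_{ll}$ is the $l$th diagonal entry of $H$; $h_{Sl}$ is the column vector of entries $h_{il}$, $i\in S$. Define \[ K_{\mathcal{B}}=\begin{pmatrix}H_{\mathcal{B}\mathcal{B}}&A_{\mathcal{B}}^T\\ A_{\mathcal{B}}&-M\end{pmatrix},\qquad K_l=\begin{pmatrix}h_{ll}&h_{\mathcal{B}l}^T&a_l^T\\ h_{\mathcal{B}l}&H_{\mathcal{B}\mathcal{B}}&A_{\mathcal{B}}^T\\ a_l&A_{\mathcal{B}}&-M\end{pmatrix}. \] *)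

theory Defs
  imports "Jordan_Normal_Form.DL_Submatrix" "Jordan_Normal_Form.Char_Poly"
begin

(* Indices are 0-based: {1..n} of the paper is {0..<n} here. *)

definition sym_psd :: "nat \<Rightarrow> real mat \<Rightarrow> bool" where
  "sym_psd n H \<longleftrightarrow> H \<in> carrier_mat n n \<and> transpose_mat H = H \<and>
     (\<forall>x \<in> carrier_vec n. x \<bullet> (H *\<^sub>v x) \<ge> 0)"

definition subvec :: "'a vec \<Rightarrow> nat set \<Rightarrow> 'a vec" where
  "subvec v I = vec (card {i. i < dim_vec v \<and> i \<in> I}) (\<lambda>i. v $ pick I i)"

definition KB :: "real mat \<Rightarrow> real mat \<Rightarrow> real mat \<Rightarrow> nat set \<Rightarrow> real mat" where
  "KB H A M B = four_block_mat (submatrix H B B) (transpose_mat (submatrix A UNIV B))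
                               (submatrix A UNIV B) (- M)"

definition Kl_col :: "real mat \<Rightarrow> real mat \<Rightarrow> nat set \<Rightarrow> nat \<Rightarrow> real vec" where
  "Kl_col H A B l = subvec (col H l) B @\<^sub>v col A l"

(* K_l = [h_ll, h_Bl^T, a_l^T; h_Bl, H_BB, A_B^T; a_l, A_B, -M] *)
definition Kl :: "real mat \<Rightarrow> real mat \<Rightarrow> real mat \<Rightarrow> nat set \<Rightarrow> nat \<Rightarrow> real mat" where
  "Kl H A M B l = (let c = Kl_col H A B l in
     four_block_mat (mat 1 1 (\<lambda>_. H $$ (l, l))) (mat 1 (dim_vec c) (\<lambda>(i, j). c $ j))
                    (mat (dim_vec c) 1 (\<lambda>(i, j). c $ i)) (KB H A M B))"

definition sys :: "nat \<Rightarrow> nat \<Rightarrow> real mat \<Rightarrow> real mat \<Rightarrow> real mat \<Rightarrow> nat set \<Rightarrow> nat set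
     \<Rightarrow> real vec \<Rightarrow> real vec \<Rightarrow> real vec \<Rightarrow> bool" where
  "sys n m H A M B N dx dy dz \<longleftrightarrow>
     dx \<in> carrier_vec n \<and> dy \<in> carrier_vec m \<and> dz \<in> carrier_vec n \<and>
     H *\<^sub>v dx - transpose_mat A *\<^sub>v dy - dz = 0\<^sub>v n \<and>
     A *\<^sub>v dx + M *\<^sub>v dy = 0\<^sub>v m \<and>
     (\<forall>i \<in> N. dx $ i = 0) \<and> (\<forall>i \<in> B. dz $ i = 0)"

end

theory Submission
  imports Defs
begin


lemma zero_smult_vec': "(v :: 'a :: comm_ring_1 vec) \<in> carrier_vec n \<Longrightarrow> 0 \<cdot>\<^sub>v v = 0\<^sub>v n"
  by (intro eq_vecI) auto

lemma minus_self_vec': "(v :: 'a :: ab_group_add vec) \<in> carrier_vec n \<Longrightarrow> v - v = 0\<^sub>v n"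
  by (intro eq_vecI) auto

lemma Pmat_mult:
  fixes w :: "real vec"
  assumes w: "w \<in> carrier_vec N" and v: "v \<in> carrier_vec N" and j: "j < N"
  shows "mat N N (\<lambda>(r,c). if c = j then w$r else if r = c then 1 else 0) *\<^sub>v v
       = vec N (\<lambda>r. w$r * v$j + (if r = j then 0 else v$r))"
proof (rule eq_vecI)
  fix r assume r: "r < dim_vec (vec N (\<lambda>r. w$r * v$j + (if r = j then 0 else v$r)))"
  hence r: "r < N" by simp
  have "(mat N N (\<lambda>(r,c). if c = j then w$r else if r = c then 1 else 0) *\<^sub>v v) $ r
     = (\<Sum>c<N. (if c = j then w$r else if r = c then 1 else 0) * v$c)"
    using r v by (simp add: scalar_prod_def atLeast0LessThan)
  also have "\<dots> = w$r * v$j + (\<Sum>c\<in>{..<N}-{j}. (if c = j then w$r else if r = c then 1 else 0) * v$c)"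
    using j by (subst sum.remove[of _ j]) auto
  also have "(\<Sum>c\<in>{..<N}-{j}. (if c = j then w$r else if r = c then 1 else 0) * v$c) = (\<Sum>c\<in>{..<N}-{j}. (if r = c then v$c else 0))"
    by (rule sum.cong) auto
  also have "\<dots> = (if r = j then 0 else v$r)" using r by (simp add: sum.delta)
  finally show "(mat N N (\<lambda>(r,c). if c = j then w$r else if r = c then 1 else 0) *\<^sub>v v) $ r = vec N (\<lambda>r. w$r * v$j + (if r = j then 0 else v$r)) $ r"
    using r by simp
qed simp


lemma bij_insert_index: assumes j: "j < N" shows "bij_betw (insert_index j) {..<N-1} ({..<N} - {j})"
proof (rule bij_betwI[where g = "delete_index j"])
  show "insert_index j \<in> {..<N - 1} \<rightarrow> {..<N} - {j}" using j by (auto simp: insert_index_def split: if_splits)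
  show "delete_index j \<in> {..<N} - {j} \<rightarrow> {..<N - 1}" using j by (auto simp: delete_index_def split: if_splits)
  show "\<And>x. x \<in> {..<N - 1} \<Longrightarrow> delete_index j (insert_index j x) = x" by simp
  show "\<And>y. y \<in> {..<N} - {j} \<Longrightarrow> insert_index j (delete_index j y) = y" by (auto simp: insert_index_def delete_index_def)
qed

lemma mult_one:
  fixes K :: "real mat"
  assumes K: "K \<in> carrier_mat N N" and sym: "transpose_mat K = K"
  and w: "w \<in> carrier_vec N" "w \<noteq> 0\<^sub>v N" "K *\<^sub>v w = 0\<^sub>v N"
  and ker: "\<And>v. v \<in> carrier_vec N \<Longrightarrow> K *\<^sub>v v = 0\<^sub>v N \<Longrightarrow> \<exists>c. v = c \<cdot>\<^sub>v w"
  shows "order 0 (char_poly K) = 1"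
proof -
  obtain j where j: "j < N" and wj: "w $ j \<noteq> 0"
    using w by (metis eq_vecI carrier_vecD index_zero_vec)
  define P where "P = mat N N (\<lambda>(r,c). if c = j then w$r else if r = c then (1::real) else 0)"
  have P: "P \<in> carrier_mat N N" unfolding P_def by simp
  have Pv: "P *\<^sub>v v = vec N (\<lambda>r. w$r * v$j + (if r = j then 0 else v$r))" if "v \<in> carrier_vec N" for v
    unfolding P_def using Pmat_mult[OF w(1) that j] .
  have Pej: "P *\<^sub>v unit_vec N j = w"
    by (subst Pv, simp, rule eq_vecI, insert w j, auto simp: unit_vec_def)
  have Pinj: "v = 0\<^sub>v N" if v: "v \<in> carrier_vec N" and Pv0: "P *\<^sub>v v = 0\<^sub>v N" for v
  proof -
    have e: "w$r * v$j + (if r = j then 0 else v$r) = 0" if "r < N" for r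
      using arg_cong[OF Pv0, of "\<lambda>x. x $ r"] Pv[OF v] that by simp
    have "v $ j = 0" using e[OF j] wj by simp
    then show ?thesis using e v by (intro eq_vecI) (auto, metis)
  qed
  have "det P \<noteq> 0" using det_0_iff_vec_prod_zero_field[OF P] Pinj by blast
  from det_non_zero_imp_unit[OF P this, of "()"]
  obtain Q where Q: "Q \<in> carrier_mat N N" and QP: "Q * P = 1\<^sub>m N" and PQ: "P * Q = 1\<^sub>m N"
    unfolding Units_def by (auto simp: ring_mat_simps)
  define Kt where "Kt = Q * K * P"
  have Kt: "Kt \<in> carrier_mat N N" unfolding Kt_def using Q K P by auto
  have "K = P * Kt * Q"
  proof -
    have "P * Kt * Q = (P * Q) * K * (P * Q)" unfolding Kt_def using P Q K
      by (simp add: assoc_mult_mat[of _ N N _ N _ N])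
    then show ?thesis using PQ K by simp
  qed
  then have "similar_mat K Kt" unfolding similar_mat_def
    by (intro exI[of _ P] exI[of _ Q], intro similar_mat_witI[OF PQ QP], insert K Kt P Q, auto)
  then have cpK: "char_poly K = char_poly Kt" by (rule char_poly_similar)
  have KP: "K * P = P * Kt"
  proof -
    have "P * Kt = (P * Q) * K * P" unfolding Kt_def using P Q K
      by (simp add: assoc_mult_mat[of _ N N _ N _ N])
    then show ?thesis using PQ K by simp
  qed
  have Ktej: "Kt *\<^sub>v unit_vec N j = 0\<^sub>v N"
  proof -
    have "Kt *\<^sub>v unit_vec N j = Q *\<^sub>v (K *\<^sub>v (P *\<^sub>v unit_vec N j))"
      unfolding Kt_def using Q K P by (simp add: assoc_mult_mat_vec[of _ N N _ N])
    moreover have "Q *\<^sub>v 0\<^sub>v N = 0\<^sub>v N" using Q by auto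
    ultimately show ?thesis using Pej w Q by simp
  qed
  have col0: "Kt $$ (r, j) = 0" if "r < N" for r
  proof -
    have "(Kt *\<^sub>v unit_vec N j) $ r = Kt $$ (r, j)" using that j Kt by simp
    then show ?thesis using Ktej that by simp
  qed
  define K' where "K' = mat_delete Kt j j"
  have K': "K' \<in> carrier_mat (N - 1) (N - 1)" unfolding K'_def using Kt by auto
  have cp: "char_poly K = monom 1 1 * char_poly K'"
    unfolding cpK K'_def by (rule char_poly_0_column[OF col0 Kt j])
  have nz: "char_poly K' \<noteq> 0" using degree_monic_char_poly[OF K'] by auto
  have root: "poly (char_poly K') 0 \<noteq> 0"
  proof
    assume "poly (char_poly K') 0 = 0"
    then have "eigenvalue K' 0" using eigenvalue_root_char_poly[OF K'] by simp
    then obtain v' where v': "v' \<in> carrier_vec (N - 1)" "v' \<noteq> 0\<^sub>v (N - 1)" "K' *\<^sub>v v' = 0 \<cdot>\<^sub>v v'"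
      unfolding eigenvalue_def eigenvector_def using K' by auto
    have "0 \<cdot>\<^sub>v v' = 0\<^sub>v (N - 1)" using v' by (intro eq_vecI) auto
    with v' have v': "v' \<in> carrier_vec (N - 1)" "v' \<noteq> 0\<^sub>v (N - 1)" "K' *\<^sub>v v' = 0\<^sub>v (N - 1)" by auto
    define v where "v = vec N (\<lambda>r. if r = j then 0 else v' $ delete_index j r)"
    have v: "v \<in> carrier_vec N" unfolding v_def by simp
    have bij: "bij_betw (insert_index j) {..<N-1} ({..<N} - {j})"
      using j by (rule bij_insert_index)
    have Ktv: "(Kt *\<^sub>v v) $ r = (\<Sum>c<N-1. Kt $$ (r, insert_index j c) * v' $ c)" if r: "r < N" for r
    proof -
      have "(Kt *\<^sub>v v) $ r = (\<Sum>c<N. Kt $$ (r, c) * v $ c)"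
        using r Kt v by (simp add: scalar_prod_def atLeast0LessThan)
      also have "\<dots> = (\<Sum>c\<in>{..<N} - {j}. Kt $$ (r, c) * v $ c)"
        using j by (subst sum.remove[of _ j]) (auto simp: v_def)
      also have "\<dots> = (\<Sum>c<N-1. Kt $$ (r, insert_index j c) * v $ insert_index j c)"
        by (rule sum.reindex_bij_betw[OF bij, symmetric])
      also have "\<dots> = (\<Sum>c<N-1. Kt $$ (r, insert_index j c) * v' $ c)"
        by (rule sum.cong, insert j, auto simp: v_def insert_index_def delete_index_def)
      finally show ?thesis .
    qed
    define s where "s = (Kt *\<^sub>v v) $ j"
    have Ktv2: "Kt *\<^sub>v v = s \<cdot>\<^sub>v unit_vec N j"
    proof (rule eq_vecI)
      fix r assume "r < dim_vec (s \<cdot>\<^sub>v unit_vec N j)"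
      then have r: "r < N" by simp
      show "(Kt *\<^sub>v v) $ r = (s \<cdot>\<^sub>v unit_vec N j) $ r"
      proof (cases "r = j")
        case True then show ?thesis using r by (simp add: s_def)
      next
        case False
        define r' where "r' = delete_index j r"
        have rr: "r = insert_index j r'" "r' < N - 1" using False r j unfolding r'_def insert_index_def delete_index_def by auto
        have ent: "K' $$ (a, c) = Kt $$ (insert_index j a, insert_index j c)" if "a < N - 1" "c < N - 1" for a c
          using that Kt unfolding K'_def by (simp add: mat_delete_def insert_index_def)
        have "(K' *\<^sub>v v') $ r' = (\<Sum>c<N-1. K' $$ (r', c) * v' $ c)"
          using rr(2) v'(1) K' by (simp add: scalar_prod_def atLeast0LessThan)
        also have "\<dots> = (\<Sum>c<N-1. Kt $$ (r, insert_index j c) * v' $ c)"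
          by (rule sum.cong, simp, subst ent, insert rr, auto)
        finally have "(K' *\<^sub>v v') $ r' = (\<Sum>c<N-1. Kt $$ (r, insert_index j c) * v' $ c)" .
        then have "(Kt *\<^sub>v v) $ r = 0" using Ktv[OF r] v'(3) rr(2) by simp
        moreover have "(s \<cdot>\<^sub>v unit_vec N j) $ r = 0" using r False by (simp add: unit_vec_def)
        ultimately show ?thesis by simp
      qed
    qed (use Kt in simp)
    define u where "u = P *\<^sub>v v"
    have u: "u \<in> carrier_vec N" unfolding u_def using P v by simp
    have Ku: "K *\<^sub>v u = s \<cdot>\<^sub>v w"
    proof -
      have "K *\<^sub>v u = (K * P) *\<^sub>v v" unfolding u_def using K P v by simp
      also have "\<dots> = P *\<^sub>v (Kt *\<^sub>v v)" unfolding KP using P Kt v by simp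
      also have "\<dots> = s \<cdot>\<^sub>v w" unfolding Ktv2 using P Pej by (simp add: mult_mat_vec)
      finally show ?thesis .
    qed
    have "w \<bullet> (K *\<^sub>v u) = 0"
      using transpose_vec_mult_scalar[OF K u w(1)] sym w u by simp
    then have "s * (w \<bullet> w) = 0" using Ku w by simp
    moreover have "w \<bullet> w \<noteq> 0" using conjugate_square_eq_0_vec[OF w(1)] w by simp
    ultimately have s0: "s = 0" by simp
    then have "K *\<^sub>v u = 0\<^sub>v N" using Ku w by (simp add: zero_smult_vec')
    then obtain c where "u = c \<cdot>\<^sub>v w" using ker u by blast
    then have "P *\<^sub>v (v - c \<cdot>\<^sub>v unit_vec N j) = 0\<^sub>v N"
      unfolding u_def using P v Pej w(1) by (simp add: mult_minus_distrib_mat_vec mult_mat_vec minus_self_vec')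
    then have "v - c \<cdot>\<^sub>v unit_vec N j = 0\<^sub>v N" using Pinj v by simp
    then have "v' = 0\<^sub>v (N - 1)"
    proof -
      assume h: "v - c \<cdot>\<^sub>v unit_vec N j = 0\<^sub>v N"
      show ?thesis
      proof (rule eq_vecI)
        fix r' assume "r' < dim_vec (0\<^sub>v (N - 1) :: real vec)"
        then have r': "r' < N - 1" by simp
        have "insert_index j r' < N" "insert_index j r' \<noteq> j" using r' unfolding insert_index_def by auto
        then have "(v - c \<cdot>\<^sub>v unit_vec N j) $ insert_index j r' = v' $ r'"
          using v by (simp add: v_def unit_vec_def)
        then show "v' $ r' = 0\<^sub>v (N - 1) $ r'" using h r' \<open>insert_index j r' < N\<close> by simp
      qed (use v' in simp)
    qed
    then show False using v' by simp
  qed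
  have "order 0 (char_poly K) = order 0 (monom 1 1 :: real poly) + order 0 (char_poly K')"
    unfolding cp by (rule order_mult) (use nz in \<open>simp add: monom_eq_0_iff\<close>)
  also have "order 0 (monom 1 1 :: real poly) = 1"
    using order_linear[of "0::real"] by (simp add: x_as_monom[symmetric])
  also have "order 0 (char_poly K') = 0" using root order_root by blast
  finally show ?thesis by simp
qed




definition Evec :: "nat \<Rightarrow> nat set \<Rightarrow> nat \<Rightarrow> real \<Rightarrow> real vec \<Rightarrow> real vec" where
  "Evec n B l t p = vec n (\<lambda>j. if j = l then t else if j \<in> B then p $ card {a\<in>B. a < j} else 0)"

lemma sum_lessThan_add: "(\<Sum>j<b + m. f j) = (\<Sum>j<b. f j) + (\<Sum>k<m. f (b + k :: nat))"
  by (induct m) (simp_all add: add.assoc)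

context
  fixes n :: nat and B :: "nat set" and l :: nat
  assumes Bn: "B \<subseteq> {0..<n}" and l: "l < n" and lB: "l \<notin> B"
begin

lemma finB: "finite B" using Bn finite_subset by blast

lemma setB: "{i. i < n \<and> i \<in> B} = B" using Bn by auto

lemma pickB: "i < card B \<Longrightarrow> pick B i \<in> B"
  using pick_in_set by blast

lemma card_pickB: "i < card B \<Longrightarrow> card {a\<in>B. a < pick B i} = i"
  using card_pick by blast

lemma pick_bij: "bij_betw (pick B) {..<card B} B"
proof (rule bij_betwI[where g = "\<lambda>j. card {a\<in>B. a < j}"])
  show "pick B \<in> {..<card B} \<rightarrow> B" using pickB by auto
  show "(\<lambda>j. card {a \<in> B. a < j}) \<in> B \<rightarrow> {..<card B}"
  proof
    fix j assume j: "j \<in> B"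
    have "{a \<in> B. a < j} \<subset> B" using j by auto
    then show "card {a \<in> B. a < j} \<in> {..<card B}" using finB by (simp add: psubset_card_mono)
  qed
  show "\<And>x. x \<in> {..<card B} \<Longrightarrow> card {a \<in> B. a < pick B x} = x" using card_pickB by auto
  show "\<And>y. y \<in> B \<Longrightarrow> pick B (card {a \<in> B. a < y}) = y" using pick_card_in_set by auto
qed

lemma sum_pick: "(\<Sum>i<card B. f (pick B i)) = (\<Sum>j\<in>B. f j)"
  using sum.reindex_bij_betw[OF pick_bij, of f] .

lemma subvec_n: "x \<in> carrier_vec n \<Longrightarrow> subvec x B = vec (card B) (\<lambda>i. x $ pick B i)"
  unfolding subvec_def using setB by auto

lemma pickB_lt: "i < card B \<Longrightarrow> pick B i < n" using pickB Bn by fastforce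

lemma pickB_ne: "i < card B \<Longrightarrow> pick B i \<noteq> l" using pickB lB by auto

lemma Evec_carrier[simp]: "Evec n B l t p \<in> carrier_vec n" unfolding Evec_def by simp

lemma Evec_l[simp]: "Evec n B l t p $ l = t" unfolding Evec_def using l by simp

lemma subvec_Evec: "p \<in> carrier_vec (card B) \<Longrightarrow> subvec (Evec n B l t p) B = p"
  by (subst subvec_n, simp, rule eq_vecI, auto simp: Evec_def pickB_lt pickB_ne pickB card_pickB)

lemma Evec_dot:
  assumes y: "y \<in> carrier_vec n"
  shows "y \<bullet> Evec n B l t p = y $ l * t + (\<Sum>i<card B. y $ pick B i * p $ i)"
proof -
  have "y \<bullet> Evec n B l t p = (\<Sum>j<n. y $ j * (if j = l then t else if j \<in> B then p $ card {a\<in>B. a < j} else 0))"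
    using y by (simp add: scalar_prod_def Evec_def atLeast0LessThan)
  also have "\<dots> = (\<Sum>j<n. (if j = l then y $ j * t else 0) + (if j \<in> B then y $ j * p $ card {a\<in>B. a < j} else 0))"
    by (rule sum.cong, insert lB, auto)
  also have "\<dots> = y $ l * t + (\<Sum>j\<in>B. y $ j * p $ card {a\<in>B. a < j})"
    using l Bn setB by (simp add: sum.distrib sum.If_cases Int_absorb1 subset_eq Int_def atLeast0LessThan)
  also have "(\<Sum>j\<in>B. y $ j * p $ card {a\<in>B. a < j}) = (\<Sum>i<card B. y $ pick B i * p $ i)"
    by (subst sum_pick[symmetric], rule sum.cong, auto simp: card_pickB)
  finally show ?thesis .
qed

end

context
  fixes n m :: nat and H A M :: "real mat" and B :: "nat set" and l :: nat
  assumes H: "H \<in> carrier_mat n n" and Hsym: "transpose_mat H = H"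
    and A: "A \<in> carrier_mat m n" and M: "M \<in> carrier_mat m m"
    and Bn: "B \<subseteq> {0..<n}" and l: "l < n" and lB: "l \<notin> B" and Msym: "transpose_mat M = M"
begin

lemma Hsym': "i < n \<Longrightarrow> j < n \<Longrightarrow> H $$ (i, j) = H $$ (j, i)"
  using arg_cong[OF Hsym, of "\<lambda>X. X $$ (j, i)"] H by simp

lemma HBB: "submatrix H B B \<in> carrier_mat (card B) (card B)"
  using H setB[OF Bn l lB] unfolding carrier_mat_def by (simp add: dim_submatrix)

lemma HBB_idx: "i < card B \<Longrightarrow> j < card B \<Longrightarrow> submatrix H B B $$ (i, j) = H $$ (pick B i, pick B j)"
  using H setB[OF Bn l lB] by (simp add: submatrix_index)

lemma AB: "submatrix A UNIV B \<in> carrier_mat m (card B)"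
  using A setB[OF Bn l lB] unfolding carrier_mat_def by (simp add: dim_submatrix)

lemma AB_idx: "k < m \<Longrightarrow> j < card B \<Longrightarrow> submatrix A UNIV B $$ (k, j) = A $$ (k, pick B j)"
  using A setB[OF Bn l lB] by (simp add: submatrix_index pick_UNIV)

lemma KB_carrier: "KB H A M B \<in> carrier_mat (card B + m) (card B + m)"
  unfolding KB_def using HBB AB M by auto

lemma KB_mult: assumes p: "p \<in> carrier_vec (card B)" and q: "q \<in> carrier_vec m"
  shows "KB H A M B *\<^sub>v (p @\<^sub>v q) = (submatrix H B B *\<^sub>v p + transpose_mat (submatrix A UNIV B) *\<^sub>v q) @\<^sub>v (submatrix A UNIV B *\<^sub>v p + (- M) *\<^sub>v q)"
  unfolding KB_def by (rule four_block_mat_mult_vec[OF HBB _ AB _ p q], insert AB M, auto)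

lemma Klcol_carrier: "Kl_col H A B l \<in> carrier_vec (card B + m)"
  unfolding Kl_col_def using H A l setB[OF Bn l lB] by (auto simp: subvec_def)

lemma Klcol_H: "i < card B \<Longrightarrow> Kl_col H A B l $ i = H $$ (pick B i, l)"
  unfolding Kl_col_def using H A l setB[OF Bn l lB] pickB_lt[OF Bn l lB]
  by (auto simp: subvec_def)

lemma Klcol_A: "k < m \<Longrightarrow> Kl_col H A B l $ (card B + k) = A $$ (k, l)"
  unfolding Kl_col_def using H A l setB[OF Bn l lB] by (auto simp: subvec_def)

lemma Kl_mult:
  assumes p: "p \<in> carrier_vec (card B)" and q: "q \<in> carrier_vec m"
  shows "Kl H A M B l *\<^sub>v (vec_of_list [t] @\<^sub>v p @\<^sub>v q) =
     vec_of_list [(H *\<^sub>v Evec n B l t p + transpose_mat A *\<^sub>v q) $ l] @\<^sub>v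
     subvec (H *\<^sub>v Evec n B l t p + transpose_mat A *\<^sub>v q) B @\<^sub>v
     (A *\<^sub>v Evec n B l t p - M *\<^sub>v q)"
proof -
  define c where "c = Kl_col H A B l"
  define x where "x = Evec n B l t p"
  define b where "b = card B"
  have c: "c \<in> carrier_vec (b + m)" unfolding c_def b_def by (rule Klcol_carrier)
  have x: "x \<in> carrier_vec n" unfolding x_def by (rule Evec_carrier[OF Bn l lB])
  have dimc: "dim_vec c = b + m" using c by simp
  define X where "X = mat 1 1 (\<lambda>_. H $$ (l, l))"
  define Y where "Y = mat 1 (dim_vec c) (\<lambda>(i, j). c $ j)"
  define Z where "Z = mat (dim_vec c) 1 (\<lambda>(i, j). c $ i)"
  have KlXYZ: "Kl H A M B l = four_block_mat X Y Z (KB H A M B)"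
    unfolding Kl_def Let_def X_def Y_def Z_def c_def ..
  have t1: "vec_of_list [t] \<in> carrier_vec 1" by (intro carrier_vecI) simp
  have pq: "p @\<^sub>v q \<in> carrier_vec (b + m)" using p q unfolding b_def by simp
  have split: "Kl H A M B l *\<^sub>v (vec_of_list [t] @\<^sub>v (p @\<^sub>v q)) =
     (X *\<^sub>v vec_of_list [t] + Y *\<^sub>v (p @\<^sub>v q)) @\<^sub>v (Z *\<^sub>v vec_of_list [t] + KB H A M B *\<^sub>v (p @\<^sub>v q))"
    unfolding KlXYZ
    by (rule four_block_mat_mult_vec[OF _ _ _ KB_carrier t1 pq[unfolded b_def]],
        auto simp: X_def Y_def Z_def dimc b_def)
  have Hx: "(H *\<^sub>v x) $ r = H $$ (r, l) * t + (\<Sum>i<b. H $$ (r, pick B i) * p $ i)" if "r < n" for r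
  proof -
    have "(H *\<^sub>v x) $ r = row H r \<bullet> x" using that H by simp
    also have "\<dots> = row H r $ l * t + (\<Sum>i<b. row H r $ pick B i * p $ i)"
      unfolding x_def b_def by (rule Evec_dot[OF Bn l lB]) (use H in auto)
    also have "\<dots> = H $$ (r, l) * t + (\<Sum>i<b. H $$ (r, pick B i) * p $ i)"
      using that H l by (auto intro!: sum.cong simp: b_def pickB_lt[OF Bn l lB])
    finally show ?thesis .
  qed
  have Ax: "(A *\<^sub>v x) $ k = A $$ (k, l) * t + (\<Sum>i<b. A $$ (k, pick B i) * p $ i)" if "k < m" for k
  proof -
    have "(A *\<^sub>v x) $ k = row A k \<bullet> x" using that A by simp
    also have "\<dots> = row A k $ l * t + (\<Sum>i<b. row A k $ pick B i * p $ i)"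
      unfolding x_def b_def by (rule Evec_dot[OF Bn l lB]) (use A in auto)
    also have "\<dots> = A $$ (k, l) * t + (\<Sum>i<b. A $$ (k, pick B i) * p $ i)"
      using that A l by (auto intro!: sum.cong simp: b_def pickB_lt[OF Bn l lB])
    finally show ?thesis .
  qed
  have Atq: "(transpose_mat A *\<^sub>v q) $ r = (\<Sum>k<m. A $$ (k, r) * q $ k)" if "r < n" for r
    using that A q by (simp add: scalar_prod_def atLeast0LessThan)
  have Ypq: "(Y *\<^sub>v (p @\<^sub>v q)) $ 0 = (\<Sum>j<b. H $$ (pick B j, l) * p $ j) + (\<Sum>k<m. A $$ (k, l) * q $ k)"
  proof -
    have "(Y *\<^sub>v (p @\<^sub>v q)) $ 0 = (\<Sum>j<b + m. c $ j * (p @\<^sub>v q) $ j)"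
      using p q by (auto simp: Y_def dimc scalar_prod_def atLeast0LessThan b_def intro!: sum.cong)
    also have "\<dots> = (\<Sum>j<b. c $ j * (p @\<^sub>v q) $ j) + (\<Sum>k<m. c $ (b + k) * (p @\<^sub>v q) $ (b + k))"
      by (rule sum_lessThan_add)
    also have "(\<Sum>j<b. c $ j * (p @\<^sub>v q) $ j) = (\<Sum>j<b. H $$ (pick B j, l) * p $ j)"
      by (rule sum.cong, insert p q, auto simp: c_def b_def Klcol_H)
    also have "(\<Sum>k<m. c $ (b + k) * (p @\<^sub>v q) $ (b + k)) = (\<Sum>k<m. A $$ (k, l) * q $ k)"
      by (rule sum.cong, insert p q, auto simp: c_def b_def Klcol_A)
    finally show ?thesis .
  qed
  have part1: "X *\<^sub>v vec_of_list [t] + Y *\<^sub>v (p @\<^sub>v q) = vec_of_list [(H *\<^sub>v x + transpose_mat A *\<^sub>v q) $ l]"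
  proof (rule eq_vecI)
    show "dim_vec (X *\<^sub>v vec_of_list [t] + Y *\<^sub>v (p @\<^sub>v q)) = dim_vec (vec_of_list [(H *\<^sub>v x + transpose_mat A *\<^sub>v q) $ l])"
      by (simp add: X_def Y_def)
    fix i assume "i < dim_vec (vec_of_list [(H *\<^sub>v x + transpose_mat A *\<^sub>v q) $ l])"
    then have i: "i = 0" by simp
    have "(X *\<^sub>v vec_of_list [t]) $ 0 = H $$ (l, l) * t"
      by (simp add: X_def scalar_prod_def)
    moreover have "(H *\<^sub>v x + transpose_mat A *\<^sub>v q) $ l = (H *\<^sub>v x) $ l + (transpose_mat A *\<^sub>v q) $ l"
      using H A x q l by simp
    moreover have "(\<Sum>j<b. H $$ (pick B j, l) * p $ j) = (\<Sum>j<b. H $$ (l, pick B j) * p $ j)"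
      by (rule sum.cong, auto simp: b_def Hsym'[OF pickB_lt[OF Bn l lB] l])
    ultimately show "(X *\<^sub>v vec_of_list [t] + Y *\<^sub>v (p @\<^sub>v q)) $ i = vec_of_list [(H *\<^sub>v x + transpose_mat A *\<^sub>v q) $ l] $ i"
      unfolding i using Ypq Hx[OF l] Atq[OF l] by (simp add: X_def Y_def)
  qed
  have part2: "Z *\<^sub>v vec_of_list [t] + KB H A M B *\<^sub>v (p @\<^sub>v q) = subvec (H *\<^sub>v x + transpose_mat A *\<^sub>v q) B @\<^sub>v (A *\<^sub>v x - M *\<^sub>v q)"
  proof (rule eq_vecI)
    show "dim_vec (Z *\<^sub>v vec_of_list [t] + KB H A M B *\<^sub>v (p @\<^sub>v q)) = dim_vec (subvec (H *\<^sub>v x + transpose_mat A *\<^sub>v q) B @\<^sub>v (A *\<^sub>v x - M *\<^sub>v q))"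
      using H A x q M KB_carrier by (simp add: Z_def dimc b_def subvec_n[OF Bn l lB])
    fix i assume "i < dim_vec (subvec (H *\<^sub>v x + transpose_mat A *\<^sub>v q) B @\<^sub>v (A *\<^sub>v x - M *\<^sub>v q))"
    then have i: "i < b + m" using H A x q M KB_carrier by (simp add: b_def subvec_n[OF Bn l lB])
    have Zt: "(Z *\<^sub>v vec_of_list [t]) $ i = c $ i * t"
      using i by (simp add: Z_def dimc scalar_prod_def)
    have addi: "(Z *\<^sub>v vec_of_list [t] + KB H A M B *\<^sub>v (p @\<^sub>v q)) $ i = (Z *\<^sub>v vec_of_list [t]) $ i + (KB H A M B *\<^sub>v (p @\<^sub>v q)) $ i"
      using i KB_carrier p q by (simp add: Z_def dimc b_def)
    show "(Z *\<^sub>v vec_of_list [t] + KB H A M B *\<^sub>v (p @\<^sub>v q)) $ i = (subvec (H *\<^sub>v x + transpose_mat A *\<^sub>v q) B @\<^sub>v (A *\<^sub>v x - M *\<^sub>v q)) $ i"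
    proof (cases "i < b")
      case True
      have pk: "pick B i < n" using True pickB_lt[OF Bn l lB] by (simp add: b_def)
      have "(KB H A M B *\<^sub>v (p @\<^sub>v q)) $ i = (submatrix H B B *\<^sub>v p) $ i + (transpose_mat (submatrix A UNIV B) *\<^sub>v q) $ i"
        unfolding KB_mult[OF p q] using True HBB AB p q by (simp add: b_def)
      also have "(submatrix H B B *\<^sub>v p) $ i = (\<Sum>j<b. H $$ (pick B i, pick B j) * p $ j)"
        using True HBB p by (simp add: b_def scalar_prod_def atLeast0LessThan HBB_idx)
      also have "(transpose_mat (submatrix A UNIV B) *\<^sub>v q) $ i = (\<Sum>k<m. A $$ (k, pick B i) * q $ k)"
        using True AB q by (simp add: b_def scalar_prod_def atLeast0LessThan AB_idx)
      finally have "(KB H A M B *\<^sub>v (p @\<^sub>v q)) $ i = (\<Sum>j<b. H $$ (pick B i, pick B j) * p $ j) + (\<Sum>k<m. A $$ (k, pick B i) * q $ k)" .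
      moreover have "(subvec (H *\<^sub>v x + transpose_mat A *\<^sub>v q) B @\<^sub>v (A *\<^sub>v x - M *\<^sub>v q)) $ i = (H *\<^sub>v x) $ pick B i + (transpose_mat A *\<^sub>v q) $ pick B i"
        using True H A x q M pk by (simp add: b_def subvec_n[OF Bn l lB])
      ultimately show ?thesis unfolding addi using Zt Hx[OF pk] Atq[OF pk] True
        by (simp add: c_def b_def Klcol_H)
    next
      case False
      define k where "k = i - b"
      have k: "k < m" "i = b + k" using i False unfolding k_def by auto
      have "(KB H A M B *\<^sub>v (p @\<^sub>v q)) $ i = (submatrix A UNIV B *\<^sub>v p) $ k + ((- M) *\<^sub>v q) $ k"
        unfolding KB_mult[OF p q] using k HBB AB M p q by (simp add: b_def)
      also have "(submatrix A UNIV B *\<^sub>v p) $ k = (\<Sum>j<b. A $$ (k, pick B j) * p $ j)"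
        using k AB p by (simp add: b_def scalar_prod_def atLeast0LessThan AB_idx)
      also have "((- M) *\<^sub>v q) $ k = - (M *\<^sub>v q) $ k"
        using k M q by (simp add: scalar_prod_def sum_negf[symmetric])
      finally have "(KB H A M B *\<^sub>v (p @\<^sub>v q)) $ i = (\<Sum>j<b. A $$ (k, pick B j) * p $ j) - (M *\<^sub>v q) $ k" by simp
      moreover have "(subvec (H *\<^sub>v x + transpose_mat A *\<^sub>v q) B @\<^sub>v (A *\<^sub>v x - M *\<^sub>v q)) $ i = (A *\<^sub>v x) $ k - (M *\<^sub>v q) $ k"
        using k H A x q M by (simp add: b_def subvec_n[OF Bn l lB])
      ultimately show ?thesis unfolding addi using Zt Ax[OF k(1)] k
        by (simp add: c_def b_def Klcol_A)
    qed
  qed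
  show ?thesis using split part1 part2 unfolding x_def by simp
qed


lemma KB_sym: "transpose_mat (KB H A M B) = KB H A M B"
proof -
  have HBBt: "transpose_mat (submatrix H B B) = submatrix H B B"
    by (rule eq_matI, insert HBB, auto simp: HBB_idx Hsym'[OF pickB_lt[OF Bn l lB] pickB_lt[OF Bn l lB]])
  have Mt: "transpose_mat M = M" by (rule Msym)
  show ?thesis unfolding KB_def
    by (subst transpose_four_block_mat[OF HBB _ AB], insert AB M, auto simp: HBBt transpose_uminus Mt)
qed

lemma Kl_carrier: "Kl H A M B l \<in> carrier_mat (1 + (card B + m)) (1 + (card B + m))"
  unfolding Kl_def Let_def using Klcol_carrier KB_carrier by auto

lemma Kl_KB:
  assumes w: "w \<in> carrier_vec (card B + m)"
  shows "Kl H A M B l *\<^sub>v (vec_of_list [0] @\<^sub>v w) = vec_of_list [Kl_col H A B l \<bullet> w] @\<^sub>v (KB H A M B *\<^sub>v w)"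
proof -
  define c where "c = Kl_col H A B l"
  define b where "b = card B"
  have c: "c \<in> carrier_vec (b + m)" unfolding c_def b_def by (rule Klcol_carrier)
  have dimc: "dim_vec c = b + m" using c by simp
  define X where "X = mat 1 1 (\<lambda>_. H $$ (l, l))"
  define Y where "Y = mat 1 (dim_vec c) (\<lambda>(i, j). c $ j)"
  define Z where "Z = mat (dim_vec c) 1 (\<lambda>(i, j). c $ i)"
  have KlXYZ: "Kl H A M B l = four_block_mat X Y Z (KB H A M B)"
    unfolding Kl_def Let_def X_def Y_def Z_def c_def ..
  have t1: "vec_of_list [0] \<in> carrier_vec 1" by (intro carrier_vecI) simp
  have split: "Kl H A M B l *\<^sub>v (vec_of_list [0] @\<^sub>v w) =
     (X *\<^sub>v vec_of_list [0] + Y *\<^sub>v w) @\<^sub>v (Z *\<^sub>v vec_of_list [0] + KB H A M B *\<^sub>v w)"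
    unfolding KlXYZ
    by (rule four_block_mat_mult_vec[OF _ _ _ KB_carrier t1 w],
        auto simp: X_def Y_def Z_def dimc b_def)
  have p1: "X *\<^sub>v vec_of_list [0] + Y *\<^sub>v w = vec_of_list [c \<bullet> w]"
  proof (rule eq_vecI)
    show "dim_vec (X *\<^sub>v vec_of_list [0] + Y *\<^sub>v w) = dim_vec (vec_of_list [c \<bullet> w])"
      by (simp add: X_def Y_def)
    fix i assume "i < dim_vec (vec_of_list [c \<bullet> w])"
    then have i: "i = 0" by simp
    have "row Y 0 = c" by (rule eq_vecI, auto simp: Y_def)
    then show "(X *\<^sub>v vec_of_list [0] + Y *\<^sub>v w) $ i = vec_of_list [c \<bullet> w] $ i"
      unfolding i by (simp add: X_def Y_def scalar_prod_def)
  qed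
  have p2: "Z *\<^sub>v vec_of_list [0] + KB H A M B *\<^sub>v w = KB H A M B *\<^sub>v w"
  proof (rule eq_vecI)
    show "dim_vec (Z *\<^sub>v vec_of_list [0] + KB H A M B *\<^sub>v w) = dim_vec (KB H A M B *\<^sub>v w)"
      using KB_carrier by (simp add: Z_def dimc b_def)
    fix i assume "i < dim_vec (KB H A M B *\<^sub>v w)"
    then have i: "i < b + m" using KB_carrier by (simp add: b_def)
    then show "(Z *\<^sub>v vec_of_list [0] + KB H A M B *\<^sub>v w) $ i = (KB H A M B *\<^sub>v w) $ i"
      using KB_carrier by (simp add: Z_def dimc b_def scalar_prod_def)
  qed
  show ?thesis using split p1 p2 unfolding c_def by simp
qed

end



lemma psd_zero:
  fixes H :: "real mat"
  assumes Hp: "sym_psd n H" and x: "x \<in> carrier_vec n" and x0: "x \<bullet> (H *\<^sub>v x) = 0"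
  shows "H *\<^sub>v x = 0\<^sub>v n"
proof -
  have H: "H \<in> carrier_mat n n" and Ht: "transpose_mat H = H"
    and psd: "\<And>z. z \<in> carrier_vec n \<Longrightarrow> z \<bullet> (H *\<^sub>v z) \<ge> 0"
    using Hp unfolding sym_psd_def by auto
  define y where "y = H *\<^sub>v x"
  have y: "y \<in> carrier_vec n" unfolding y_def using H x by simp
  define a where "a = y \<bullet> y"
  define c where "c = y \<bullet> (H *\<^sub>v y)"
  have Hy: "H *\<^sub>v y \<in> carrier_vec n" using H y by simp
  have c0: "c \<ge> 0" unfolding c_def using psd[OF y] .
  have a0: "a \<ge> 0" unfolding a_def scalar_prod_def by (auto intro!: sum_nonneg)
  have xHy: "x \<bullet> (H *\<^sub>v y) = a"
    using transpose_vec_mult_scalar[OF H y x] Ht unfolding a_def y_def by simp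
  have xy: "x \<bullet> y = 0" using x0 unfolding y_def .
  have expand: "(x + s \<cdot>\<^sub>v y) \<bullet> (H *\<^sub>v (x + s \<cdot>\<^sub>v y)) = 2 * s * a + s^2 * c" for s
  proof -
    have "H *\<^sub>v (x + s \<cdot>\<^sub>v y) = y + s \<cdot>\<^sub>v (H *\<^sub>v y)"
      using H x y by (simp add: mult_add_distrib_mat_vec mult_mat_vec y_def)
    then have "(x + s \<cdot>\<^sub>v y) \<bullet> (H *\<^sub>v (x + s \<cdot>\<^sub>v y)) = (x + s \<cdot>\<^sub>v y) \<bullet> (y + s \<cdot>\<^sub>v (H *\<^sub>v y))" by simp
    also have "\<dots> = x \<bullet> y + s * (x \<bullet> (H *\<^sub>v y)) + s * (y \<bullet> y) + s * s * (y \<bullet> (H *\<^sub>v y))"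
      using x y Hy by (simp add: add_scalar_prod_distrib[of _ n] scalar_prod_add_distrib[of _ n]
          smult_scalar_prod_distrib scalar_prod_smult_distrib algebra_simps)
    also have "\<dots> = 2 * s * a + s^2 * c" unfolding xHy xy a_def[symmetric] c_def[symmetric]
      by (simp add: power2_eq_square)
    finally show ?thesis .
  qed
  have "a = 0"
  proof (rule ccontr)
    assume "a \<noteq> 0"
    with a0 have ap: "a > 0" by simp
    define d where "d = c + 1"
    have dp: "d > 0" using c0 unfolding d_def by simp
    define s where "s = - a / d"
    have sd: "s * d = - a" unfolding s_def using dp by simp
    have ge: "0 \<le> 2 * s * a + s^2 * c" using psd[of "x + s \<cdot>\<^sub>v y"] x y expand[of s] by simp
    have "d * d * (2 * s * a + s^2 * c) = 2 * a * d * (s * d) + c * (s * d) * (s * d)"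
      by (simp add: power2_eq_square algebra_simps)
    also have "\<dots> = - (a * a * (c + 2))" unfolding sd by (simp add: d_def algebra_simps)
    finally have eq: "d * d * (2 * s * a + s^2 * c) = - (a * a * (c + 2))" .
    have "0 \<le> d * d * (2 * s * a + s^2 * c)" using dp ge by simp
    moreover have "a * a * (c + 2) > 0" using ap c0 by simp
    ultimately show False unfolding eq by simp
  qed
  then have "y \<bullet>c y = 0" unfolding a_def by simp
  then have "y = 0\<^sub>v n" using conjugate_square_eq_0_vec[OF y] by simp
  then show ?thesis unfolding y_def .
qed


lemma mat_vec_uminus: "(A :: real mat) \<in> carrier_mat nr nc \<Longrightarrow> v \<in> carrier_vec nc \<Longrightarrow> A *\<^sub>v (- v) = - (A *\<^sub>v v)"
  by (intro eq_vecI) auto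

lemma app1_0[simp]: "(vec_of_list [x] @\<^sub>v w) $ 0 = x"
  by simp

lemma app1_Suc[simp]: "i < dim_vec w \<Longrightarrow> (vec_of_list [x] @\<^sub>v w) $ Suc i = w $ i"
  by simp

lemma app1_dim[simp]: "dim_vec (vec_of_list [x] @\<^sub>v w) = Suc (dim_vec w)"
  by simp

lemma app1_carrier: "w \<in> carrier_vec k \<Longrightarrow> vec_of_list [x] @\<^sub>v w \<in> carrier_vec (1 + k)"
  by (intro carrier_vecI) simp

lemma app1_eq: assumes "dim_vec w = dim_vec w'"
  shows "(vec_of_list [x] @\<^sub>v w = vec_of_list [x'] @\<^sub>v w') \<longleftrightarrow> x = x' \<and> w = w'"
proof
  assume h: "vec_of_list [x] @\<^sub>v w = vec_of_list [x'] @\<^sub>v w'"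
  have "x = x'" using arg_cong[OF h, of "\<lambda>v. v $ 0"] by simp
  moreover have "w = w'"
  proof (rule eq_vecI)
    fix i assume i: "i < dim_vec w'"
    show "w $ i = w' $ i" using arg_cong[OF h, of "\<lambda>v. v $ Suc i"] i assms by simp
  qed (use assms in simp)
  ultimately show "x = x' \<and> w = w'" ..
qed simp

lemma zero_app3: "vec_of_list [0::real] @\<^sub>v 0\<^sub>v a @\<^sub>v 0\<^sub>v c = 0\<^sub>v (1 + (a + c))"
proof (rule eq_vecI)
  fix i assume "i < dim_vec (0\<^sub>v (1 + (a + c)) :: real vec)"
  then show "(vec_of_list [0::real] @\<^sub>v 0\<^sub>v a @\<^sub>v 0\<^sub>v c) $ i = 0\<^sub>v (1 + (a + c)) $ i"
    by (cases i) auto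
qed simp

lemma zero_app2: "0\<^sub>v a @\<^sub>v 0\<^sub>v c = (0\<^sub>v (a + c) :: real vec)"
  by (rule eq_vecI) auto

context
  fixes n m :: nat and H M A :: "real mat" and l :: nat and B N :: "nat set"
  assumes Hp: "sym_psd n H" and Mp: "sym_psd m M" and A: "A \<in> carrier_mat m n"
    and l: "l < n" and Bn: "B \<subseteq> {0..<n}" and Nn: "N \<subseteq> {0..<n}"
    and lB: "l \<notin> B" and lN: "l \<notin> N" and BN: "B \<inter> N = {}"
    and union: "B \<union> {l} \<union> N = {0..<n}"
    and Kl_ns: "det (Kl H A M B l) \<noteq> 0"
begin

lemma H: "H \<in> carrier_mat n n" and Hs: "transpose_mat H = H"
  using Hp unfolding sym_psd_def by auto

lemma M: "M \<in> carrier_mat m m" and Ms: "transpose_mat M = M"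
  using Mp unfolding sym_psd_def by auto

lemma Hpsd: "x \<in> carrier_vec n \<Longrightarrow> x \<bullet> (H *\<^sub>v x) \<ge> 0"
  using Hp unfolding sym_psd_def by auto

lemma Mpsd: "x \<in> carrier_vec m \<Longrightarrow> x \<bullet> (M *\<^sub>v x) \<ge> 0"
  using Mp unfolding sym_psd_def by auto

lemmas Kl_mult' = Kl_mult[OF H Hs A M Bn l lB Ms]
lemmas Kl_KB' = Kl_KB[OF H Hs A M Bn l lB Ms]
lemmas KB_sym' = KB_sym[OF H Hs A M Bn l lB Ms]
lemmas KB_carrier' = KB_carrier[OF H Hs A M Bn l lB Ms]
lemmas Kl_carrier' = Kl_carrier[OF H Hs A M Bn l lB Ms]
lemmas Klcol_carrier' = Klcol_carrier[OF H Hs A M Bn l lB Ms]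

lemma sys_D: assumes "sys n m H A M B N dx dy dz"
  shows "dx \<in> carrier_vec n" "dy \<in> carrier_vec m" "dz \<in> carrier_vec n"
    "\<And>i. i \<in> N \<Longrightarrow> dx $ i = 0" "\<And>i. i \<in> B \<Longrightarrow> dz $ i = 0"
    "H *\<^sub>v dx - transpose_mat A *\<^sub>v dy - dz = 0\<^sub>v n" "A *\<^sub>v dx + M *\<^sub>v dy = 0\<^sub>v m"
  using assms unfolding sys_def by auto

lemma sol_dz: assumes s: "sys n m H A M B N dx dy dz"
  shows "dz = H *\<^sub>v dx - transpose_mat A *\<^sub>v dy"
proof (rule eq_vecI)
  note d = sys_D[OF s]
  fix i assume "i < dim_vec (H *\<^sub>v dx - transpose_mat A *\<^sub>v dy)"
  then have i: "i < n" using H A by simp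
  have "(H *\<^sub>v dx - transpose_mat A *\<^sub>v dy - dz) $ i = 0" using d(6) i by simp
  then show "dz $ i = (H *\<^sub>v dx - transpose_mat A *\<^sub>v dy) $ i" using i H A d(1-3) by simp
qed (use sys_D[OF s] H A in simp)

lemma sol_Ax: assumes s: "sys n m H A M B N dx dy dz"
  shows "A *\<^sub>v dx = - (M *\<^sub>v dy)"
proof (rule eq_vecI)
  note d = sys_D[OF s]
  fix i assume "i < dim_vec (- (M *\<^sub>v dy))"
  then have i: "i < m" using M by simp
  have "(A *\<^sub>v dx + M *\<^sub>v dy) $ i = 0" using d(7) i by simp
  then show "(A *\<^sub>v dx) $ i = (- (M *\<^sub>v dy)) $ i" using i M A d(1-3) by simp
qed (use sys_D[OF s] M A in simp)

lemma card_less_B: "j \<in> B \<Longrightarrow> card {a\<in>B. a < j} < card B"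
proof -
  assume j: "j \<in> B"
  have "{a \<in> B. a < j} \<subset> B" using j by auto
  then show ?thesis using finB[OF Bn l lB] by (simp add: psubset_card_mono)
qed

lemma sol_E: assumes s: "sys n m H A M B N dx dy dz"
  shows "dx = Evec n B l (dx $ l) (subvec dx B)"
proof (rule eq_vecI)
  note d = sys_D[OF s]
  fix j assume "j < dim_vec (Evec n B l (dx $ l) (subvec dx B))"
  then have j: "j < n" by (simp add: Evec_def)
  show "dx $ j = Evec n B l (dx $ l) (subvec dx B) $ j"
  proof (cases "j = l")
    case True then show ?thesis using j l by (simp add: Evec_def)
  next
    case False
    show ?thesis
    proof (cases "j \<in> B")
      case True
      have c: "card {a\<in>B. a < j} < card B" by (rule card_less_B[OF True])
      have "Evec n B l (dx $ l) (subvec dx B) $ j = subvec dx B $ card {a\<in>B. a < j}"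
        using j False True unfolding Evec_def by simp
      also have "\<dots> = dx $ pick B (card {a\<in>B. a < j})"
        using c d(1) by (simp add: subvec_n[OF Bn l lB])
      also have "pick B (card {a\<in>B. a < j}) = j" using True by (rule pick_card_in_set)
      finally show ?thesis by simp
    next
      case nB: False
      have "j \<in> B \<union> {l} \<union> N" unfolding union using j by simp
      then have jN: "j \<in> N" using nB False by blast
      have "Evec n B l (dx $ l) (subvec dx B) $ j = 0"
        using j False nB unfolding Evec_def by simp
      then show ?thesis using d(4)[OF jN] by simp
    qed
  qed
qed (use sys_D[OF s] in \<open>simp add: Evec_def\<close>)

lemma subvec_carrier: "x \<in> carrier_vec n \<Longrightarrow> subvec x B \<in> carrier_vec (card B)"
  by (simp add: subvec_n[OF Bn l lB])

lemma Kl_inj: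
  assumes v: "v \<in> carrier_vec (1 + (card B + m))" and v': "v' \<in> carrier_vec (1 + (card B + m))"
    and eq: "Kl H A M B l *\<^sub>v v = Kl H A M B l *\<^sub>v v'"
  shows "v = v'"
proof -
  have "Kl H A M B l *\<^sub>v (v - v') = 0\<^sub>v (1 + (card B + m))"
    using eq v v' Kl_carrier' by (simp add: mult_minus_distrib_mat_vec)
  moreover have "v - v' \<in> carrier_vec (1 + (card B + m))" using v v' by simp
  ultimately have "v - v' = 0\<^sub>v (1 + (card B + m))"
    using det_0_iff_vec_prod_zero_field[OF Kl_carrier'] Kl_ns by blast
  note h = this
  show ?thesis
  proof (rule eq_vecI)
    fix i assume i: "i < dim_vec v'"
    then have "(v - v') $ i = 0" using h v v' by simp
    then show "v $ i = v' $ i" using v v' i by simp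
  qed (use v v' in simp)
qed

lemma sol_Kl: assumes s: "sys n m H A M B N dx dy dz"
  shows "Kl H A M B l *\<^sub>v (vec_of_list [dx $ l] @\<^sub>v subvec dx B @\<^sub>v (- dy)) =
    vec_of_list [dz $ l] @\<^sub>v 0\<^sub>v (card B) @\<^sub>v 0\<^sub>v m"
proof -
  note d = sys_D[OF s]
  have mA: "transpose_mat A *\<^sub>v (- dy) = - (transpose_mat A *\<^sub>v dy)"
    by (rule mat_vec_uminus) (use A d(2) in auto)
  have mM: "M *\<^sub>v (- dy) = - (M *\<^sub>v dy)"
    by (rule mat_vec_uminus) (use M d(2) in auto)
  have e1: "H *\<^sub>v dx + transpose_mat A *\<^sub>v (- dy) = dz"
  proof (rule eq_vecI)
    fix i assume "i < dim_vec dz"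
    then have i: "i < n" using d(3) by simp
    have "dz $ i = (H *\<^sub>v dx) $ i - (transpose_mat A *\<^sub>v dy) $ i"
      using arg_cong[OF sol_dz[OF s], of "\<lambda>x. x $ i"] i H A d(1-2) by simp
    then show "(H *\<^sub>v dx + transpose_mat A *\<^sub>v (- dy)) $ i = dz $ i"
      unfolding mA using i H A d(1-2) by simp
  qed (use H A d(1-3) in simp)
  have e2: "A *\<^sub>v dx - M *\<^sub>v (- dy) = 0\<^sub>v m"
  proof (rule eq_vecI)
    fix i assume "i < dim_vec (0\<^sub>v m :: real vec)"
    then have i: "i < m" by simp
    have "(A *\<^sub>v dx) $ i = - (M *\<^sub>v dy) $ i"
      using arg_cong[OF sol_Ax[OF s], of "\<lambda>x. x $ i"] i M d(2) by simp
    then show "(A *\<^sub>v dx - M *\<^sub>v (- dy)) $ i = 0\<^sub>v m $ i"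
      unfolding mM using i M A d(1-2) by simp
  qed (use M A d(1-2) in simp)
  have e3: "subvec dz B = 0\<^sub>v (card B)"
  proof (rule eq_vecI)
    fix i assume "i < dim_vec (0\<^sub>v (card B) :: real vec)"
    then have i: "i < card B" by simp
    then have "pick B i \<in> B" by (rule pickB[OF Bn l lB])
    then show "subvec dz B $ i = 0\<^sub>v (card B) $ i"
      using i d(3) d(5) by (simp add: subvec_n[OF Bn l lB])
  qed (use d(3) in \<open>simp add: subvec_n[OF Bn l lB]\<close>)
  have mdy: "- dy \<in> carrier_vec m" using d(2) by simp
  have K: "Kl H A M B l *\<^sub>v (vec_of_list [dx $ l] @\<^sub>v subvec dx B @\<^sub>v (- dy)) =
     vec_of_list [(H *\<^sub>v Evec n B l (dx $ l) (subvec dx B) + transpose_mat A *\<^sub>v (- dy)) $ l] @\<^sub>v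
     subvec (H *\<^sub>v Evec n B l (dx $ l) (subvec dx B) + transpose_mat A *\<^sub>v (- dy)) B @\<^sub>v
     (A *\<^sub>v Evec n B l (dx $ l) (subvec dx B) - M *\<^sub>v (- dy))"
    by (rule Kl_mult'[OF subvec_carrier[OF d(1)] mdy])
  have E: "Evec n B l (dx $ l) (subvec dx B) = dx" by (rule sol_E[OF s, symmetric])
  show ?thesis using K unfolding E e1 e2 e3 .
qed


lemma quad: assumes s: "sys n m H A M B N dx dy dz"
  shows "dz $ l * dx $ l = dx \<bullet> (H *\<^sub>v dx) + dy \<bullet> (M *\<^sub>v dy)"
proof -
  note d = sys_D[OF s]
  have E: "Evec n B l (dx $ l) (subvec dx B) = dx" by (rule sol_E[OF s, symmetric])
  have "dz \<bullet> Evec n B l (dx $ l) (subvec dx B) = dz $ l * dx $ l + (\<Sum>i<card B. dz $ pick B i * subvec dx B $ i)"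
    by (rule Evec_dot[OF Bn l lB d(3)])
  also have "(\<Sum>i<card B. dz $ pick B i * subvec dx B $ i) = 0"
    by (rule sum.neutral, use d(5) pickB[OF Bn l lB] in auto)
  finally have 1: "dz \<bullet> dx = dz $ l * dx $ l" unfolding E by simp
  have Hdx: "H *\<^sub>v dx \<in> carrier_vec n" using H d(1) by simp
  have Atdy: "transpose_mat A *\<^sub>v dy \<in> carrier_vec n" using A d(2) by simp
  have Mdy: "M *\<^sub>v dy \<in> carrier_vec m" using M d(2) by simp
  have "dz \<bullet> dx = (H *\<^sub>v dx) \<bullet> dx - (transpose_mat A *\<^sub>v dy) \<bullet> dx"
    unfolding sol_dz[OF s] by (rule minus_scalar_prod_distrib[OF Hdx Atdy d(1)])
  also have "(H *\<^sub>v dx) \<bullet> dx = dx \<bullet> (H *\<^sub>v dx)" by (rule comm_scalar_prod[OF Hdx d(1)])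
  also have "(transpose_mat A *\<^sub>v dy) \<bullet> dx = dy \<bullet> (A *\<^sub>v dx)" by (rule transpose_vec_mult_scalar[OF A d(1) d(2)])
  also have "dy \<bullet> (A *\<^sub>v dx) = - (dy \<bullet> (M *\<^sub>v dy))" unfolding sol_Ax[OF s]
    by (rule scalar_prod_uminus_right) (use Mdy d(2) M in simp)
  finally show ?thesis unfolding 1 by simp
qed

lemma sys_zero: "sys n m H A M B N (0\<^sub>v n) (0\<^sub>v m) (0\<^sub>v n)"
proof -
  have "H *\<^sub>v 0\<^sub>v n = 0\<^sub>v n" using H by auto
  moreover have "transpose_mat A *\<^sub>v 0\<^sub>v m = 0\<^sub>v n" using A by auto
  moreover have "A *\<^sub>v 0\<^sub>v n = 0\<^sub>v m" using A by auto
  moreover have "M *\<^sub>v 0\<^sub>v m = 0\<^sub>v m" using M by auto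
  ultimately show ?thesis unfolding sys_def using Bn Nn by auto
qed

lemma unique: assumes s: "sys n m H A M B N dx dy dz" and s': "sys n m H A M B N dx' dy' dz'"
  and eq: "dz $ l = dz' $ l"
  shows "dx = dx' \<and> dy = dy' \<and> dz = dz'"
proof -
  note d = sys_D[OF s] and d' = sys_D[OF s']
  have u: "vec_of_list [dx $ l] @\<^sub>v subvec dx B @\<^sub>v (- dy) \<in> carrier_vec (1 + (card B + m))"
    by (rule app1_carrier) (use d(2) subvec_carrier[OF d(1)] in simp)
  have u': "vec_of_list [dx' $ l] @\<^sub>v subvec dx' B @\<^sub>v (- dy') \<in> carrier_vec (1 + (card B + m))"
    by (rule app1_carrier) (use d'(2) subvec_carrier[OF d'(1)] in simp)
  have "vec_of_list [dx $ l] @\<^sub>v subvec dx B @\<^sub>v (- dy) = vec_of_list [dx' $ l] @\<^sub>v subvec dx' B @\<^sub>v (- dy')"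
    by (rule Kl_inj[OF u u'], unfold sol_Kl[OF s] sol_Kl[OF s'] eq, rule refl)
  then have "dx $ l = dx' $ l \<and> subvec dx B @\<^sub>v (- dy) = subvec dx' B @\<^sub>v (- dy')"
    by (subst (asm) app1_eq) (use d(2) d'(2) subvec_carrier[OF d(1)] subvec_carrier[OF d'(1)] in simp_all)
  then have h1: "dx $ l = dx' $ l" and h2: "subvec dx B = subvec dx' B" and h3: "- dy = - dy'"
    using append_vec_eq[OF subvec_carrier[OF d(1)] subvec_carrier[OF d'(1)]] by auto
  have dxx: "dx = dx'" using sol_E[OF s] sol_E[OF s'] h1 h2 by simp
  have dyy: "dy = dy'"
  proof (rule eq_vecI)
    fix i assume i: "i < dim_vec dy'"
    show "dy $ i = dy' $ i" using arg_cong[OF h3, of "\<lambda>v. v $ i"] i d(2) d'(2) by simp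
  qed (use d(2) d'(2) in simp)
  have "dz = dz'" using sol_dz[OF s] sol_dz[OF s'] dxx dyy by simp
  with dxx dyy show ?thesis by simp
qed


lemma HBN: "submatrix H B N \<in> carrier_mat (card B) (card N)"
  using H setB[OF Bn l lB] setB[OF Nn l lN] unfolding carrier_mat_def by (simp add: dim_submatrix)

lemma ANm: "submatrix A UNIV N \<in> carrier_mat m (card N)"
  using A setB[OF Nn l lN] unfolding carrier_mat_def by (simp add: dim_submatrix)

lemma dzN: assumes s: "sys n m H A M B N dx dy dz"
  shows "subvec dz N = (dx $ l) \<cdot>\<^sub>v subvec (col H l) N
              + transpose_mat (submatrix H B N) *\<^sub>v subvec dx B
              - transpose_mat (submatrix A UNIV N) *\<^sub>v dy"
proof -
  note d = sys_D[OF s]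
  define b where "b = card B"
  define p where "p = subvec dx B"
  define t where "t = dx $ l"
  have p: "p \<in> carrier_vec b" unfolding p_def b_def by (rule subvec_carrier[OF d(1)])
  have E: "Evec n B l t p = dx" unfolding t_def p_def by (rule sol_E[OF s, symmetric])
  have colH: "col H l \<in> carrier_vec n" using H l by simp
  have v1: "(dx $ l) \<cdot>\<^sub>v subvec (col H l) N \<in> carrier_vec (card N)"
    using colH by (simp add: subvec_n[OF Nn l lN])
  have v2: "transpose_mat (submatrix H B N) *\<^sub>v subvec dx B \<in> carrier_vec (card N)"
    using HBN subvec_carrier[OF d(1)] by simp
  have v3: "transpose_mat (submatrix A UNIV N) *\<^sub>v dy \<in> carrier_vec (card N)"
    using ANm d(2) by simp
  show ?thesis
  proof (rule eq_vecI)
    show "dim_vec (subvec dz N) = dim_vec ((dx $ l) \<cdot>\<^sub>v subvec (col H l) N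
              + transpose_mat (submatrix H B N) *\<^sub>v subvec dx B
              - transpose_mat (submatrix A UNIV N) *\<^sub>v dy)"
      using v1 v2 v3 d(3) HBN ANm by (simp add: subvec_n[OF Nn l lN])
    fix i assume "i < dim_vec ((dx $ l) \<cdot>\<^sub>v subvec (col H l) N
              + transpose_mat (submatrix H B N) *\<^sub>v subvec dx B
              - transpose_mat (submatrix A UNIV N) *\<^sub>v dy)"
    then have i: "i < card N" using v1 v2 v3 HBN ANm by simp
    define j where "j = pick N i"
    have j: "j < n" "j \<noteq> l" unfolding j_def using pickB_lt[OF Nn l lN i] pickB_ne[OF Nn l lN i] by auto
    have Hdx: "(H *\<^sub>v dx) $ j = H $$ (j, l) * t + (\<Sum>i'<b. H $$ (j, pick B i') * p $ i')"
    proof -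
      have "(H *\<^sub>v dx) $ j = row H j \<bullet> Evec n B l t p" unfolding E using j H by simp
      also have "\<dots> = row H j $ l * t + (\<Sum>i'<b. row H j $ pick B i' * p $ i')"
        unfolding b_def by (rule Evec_dot[OF Bn l lB]) (use H in auto)
      also have "\<dots> = H $$ (j, l) * t + (\<Sum>i'<b. H $$ (j, pick B i') * p $ i')"
        using j H l by (auto intro!: sum.cong simp: b_def pickB_lt[OF Bn l lB])
      finally show ?thesis .
    qed
    have Atdy: "(transpose_mat A *\<^sub>v dy) $ j = (\<Sum>k<m. A $$ (k, j) * dy $ k)"
      using j A d(2) by (simp add: scalar_prod_def atLeast0LessThan)
    have L: "subvec dz N $ i = dz $ j"
      using i d(3) by (simp add: subvec_n[OF Nn l lN] j_def)
    have dzj: "dz $ j = (H *\<^sub>v dx) $ j - (transpose_mat A *\<^sub>v dy) $ j"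
      using arg_cong[OF sol_dz[OF s], of "\<lambda>x. x $ j"] j H A d(1-2) by simp
    have R1: "((dx $ l) \<cdot>\<^sub>v subvec (col H l) N) $ i = t * H $$ (j, l)"
      using i colH H l j by (simp add: subvec_n[OF Nn l lN] j_def t_def)
    have R2: "(transpose_mat (submatrix H B N) *\<^sub>v subvec dx B) $ i = (\<Sum>i'<b. H $$ (j, pick B i') * p $ i')"
    proof -
      have "(transpose_mat (submatrix H B N) *\<^sub>v subvec dx B) $ i = (\<Sum>i'<b. submatrix H B N $$ (i', i) * p $ i')"
        using i HBN p by (simp add: scalar_prod_def atLeast0LessThan p_def b_def)
      also have "\<dots> = (\<Sum>i'<b. H $$ (j, pick B i') * p $ i')"
      proof (rule sum.cong)
        fix i' assume "i' \<in> {..<b}"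
        then have i': "i' < card B" by (simp add: b_def)
        have "submatrix H B N $$ (i', i) = H $$ (pick B i', j)"
          using i i' H setB[OF Bn l lB] setB[OF Nn l lN] by (simp add: submatrix_index j_def)
        also have "\<dots> = H $$ (j, pick B i')" by (rule Hsym'[OF H Hs A M Bn l lB Ms pickB_lt[OF Bn l lB i'] j(1)])
        finally show "submatrix H B N $$ (i', i) * p $ i' = H $$ (j, pick B i') * p $ i'" by simp
      qed simp
      finally show ?thesis .
    qed
    have R3: "(transpose_mat (submatrix A UNIV N) *\<^sub>v dy) $ i = (\<Sum>k<m. A $$ (k, j) * dy $ k)"
    proof -
      have "(transpose_mat (submatrix A UNIV N) *\<^sub>v dy) $ i = (\<Sum>k<m. submatrix A UNIV N $$ (k, i) * dy $ k)"
        using i ANm d(2) by (simp add: scalar_prod_def atLeast0LessThan)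
      also have "\<dots> = (\<Sum>k<m. A $$ (k, j) * dy $ k)"
        by (rule sum.cong, simp, use i A setB[OF Nn l lN] in \<open>simp add: submatrix_index j_def pick_UNIV\<close>)
      finally show ?thesis .
    qed
    have "((dx $ l) \<cdot>\<^sub>v subvec (col H l) N + transpose_mat (submatrix H B N) *\<^sub>v subvec dx B
              - transpose_mat (submatrix A UNIV N) *\<^sub>v dy) $ i
          = ((dx $ l) \<cdot>\<^sub>v subvec (col H l) N) $ i + (transpose_mat (submatrix H B N) *\<^sub>v subvec dx B) $ i
              - (transpose_mat (submatrix A UNIV N) *\<^sub>v dy) $ i"
      using i v1 v2 v3 HBN ANm by simp
    then show "subvec dz N $ i = ((dx $ l) \<cdot>\<^sub>v subvec (col H l) N
              + transpose_mat (submatrix H B N) *\<^sub>v subvec dx B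
              - transpose_mat (submatrix A UNIV N) *\<^sub>v dy) $ i"
      unfolding L dzj Hdx Atdy R1 R2 R3 by simp
  qed
qed


lemma Kl_zero: "Kl H A M B l *\<^sub>v 0\<^sub>v (1 + (card B + m)) = 0\<^sub>v (1 + (card B + m))"
  using Kl_carrier' by auto

lemma u_carrier: assumes s: "sys n m H A M B N dx dy dz"
  shows "vec_of_list [dx $ l] @\<^sub>v subvec dx B @\<^sub>v (- dy) \<in> carrier_vec (1 + (card B + m))"
  by (rule app1_carrier) (use sys_D(2)[OF s] subvec_carrier[OF sys_D(1)[OF s]] in simp)

lemma ker: assumes s: "sys n m H A M B N dx dy dz" and zl: "dz $ l > 0"
  and w: "w \<in> carrier_vec (card B + m)" and Kw: "KB H A M B *\<^sub>v w = 0\<^sub>v (card B + m)"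
  shows "\<exists>c. vec_of_list [0] @\<^sub>v w = c \<cdot>\<^sub>v (vec_of_list [dx $ l] @\<^sub>v subvec dx B @\<^sub>v (- dy))"
proof -
  define u where "u = vec_of_list [dx $ l] @\<^sub>v subvec dx B @\<^sub>v (- dy)"
  have u: "u \<in> carrier_vec (1 + (card B + m))" unfolding u_def by (rule u_carrier[OF s])
  define s0 where "s0 = Kl_col H A B l \<bullet> w"
  define c where "c = s0 / dz $ l"
  have 1: "Kl H A M B l *\<^sub>v (vec_of_list [0] @\<^sub>v w) = vec_of_list [s0] @\<^sub>v 0\<^sub>v (card B + m)"
    unfolding Kl_KB'[OF w] Kw s0_def ..
  have "Kl H A M B l *\<^sub>v (c \<cdot>\<^sub>v u) = c \<cdot>\<^sub>v (Kl H A M B l *\<^sub>v u)"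
    by (rule mult_mat_vec[OF Kl_carrier' u])
  also have "Kl H A M B l *\<^sub>v u = vec_of_list [dz $ l] @\<^sub>v 0\<^sub>v (card B) @\<^sub>v 0\<^sub>v m"
    unfolding u_def by (rule sol_Kl[OF s])
  also have "c \<cdot>\<^sub>v (vec_of_list [dz $ l] @\<^sub>v 0\<^sub>v (card B) @\<^sub>v 0\<^sub>v m) = vec_of_list [s0] @\<^sub>v 0\<^sub>v (card B + m)"
  proof (rule eq_vecI)
    fix i assume "i < dim_vec (vec_of_list [s0] @\<^sub>v 0\<^sub>v (card B + m))"
    then show "(c \<cdot>\<^sub>v (vec_of_list [dz $ l] @\<^sub>v 0\<^sub>v (card B) @\<^sub>v 0\<^sub>v m)) $ i = (vec_of_list [s0] @\<^sub>v 0\<^sub>v (card B + m)) $ i"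
      using zl by (cases i) (auto simp: c_def)
  qed simp
  finally have 2: "Kl H A M B l *\<^sub>v (c \<cdot>\<^sub>v u) = vec_of_list [s0] @\<^sub>v 0\<^sub>v (card B + m)" .
  have "vec_of_list [0] @\<^sub>v w = c \<cdot>\<^sub>v u"
    by (rule Kl_inj[OF app1_carrier[OF w]], use u in simp, unfold 1 2, rule refl)
  then show ?thesis unfolding u_def by blast
qed

lemma final: assumes s: "sys n m H A M B N dx dy dz" and zl: "dz $ l > 0"
  shows "(det (KB H A M B) \<noteq> 0 \<and> dx $ l > 0) \<or>
            (det (KB H A M B) = 0 \<and> dx $ l = 0 \<and> subvec dx B = 0\<^sub>v (card B) \<and>
             order 0 (char_poly (KB H A M B)) = 1 \<and>
             eigenvector (KB H A M B) (0\<^sub>v (card B) @\<^sub>v dy) 0)"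
proof -
  note d = sys_D[OF s]
  define t where "t = dx $ l"
  define b where "b = card B"
  have hx: "dx \<bullet> (H *\<^sub>v dx) \<ge> 0" by (rule Hpsd[OF d(1)])
  have hy: "dy \<bullet> (M *\<^sub>v dy) \<ge> 0" by (rule Mpsd[OF d(2)])
  have q: "dz $ l * t = dx \<bullet> (H *\<^sub>v dx) + dy \<bullet> (M *\<^sub>v dy)" unfolding t_def by (rule quad[OF s])
  have "dz $ l * t \<ge> 0" using q hx hy by simp
  then have t0: "t \<ge> 0" using zl by (simp add: zero_le_mult_iff)
  show ?thesis
  proof (cases "t > 0")
    case True
    have "det (KB H A M B) \<noteq> 0"
    proof
      assume "det (KB H A M B) = 0"
      then obtain w where w: "w \<in> carrier_vec (card B + m)" "w \<noteq> 0\<^sub>v (card B + m)"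
        "KB H A M B *\<^sub>v w = 0\<^sub>v (card B + m)"
        using det_0_iff_vec_prod_zero_field[OF KB_carrier'] by blast
      obtain c where c: "vec_of_list [0] @\<^sub>v w = c \<cdot>\<^sub>v (vec_of_list [dx $ l] @\<^sub>v subvec dx B @\<^sub>v (- dy))"
        using ker[OF s zl w(1) w(3)] by blast
      have "0 = c * t" using arg_cong[OF c, of "\<lambda>v. v $ 0"] unfolding t_def by simp
      then have c0: "c = 0" using True by simp
      have "w = 0\<^sub>v (card B + m)"
      proof (rule eq_vecI)
        fix i assume "i < dim_vec (0\<^sub>v (card B + m) :: real vec)"
        then have i: "i < card B + m" by simp
        show "w $ i = 0\<^sub>v (card B + m) $ i"
          using arg_cong[OF c, of "\<lambda>v. v $ Suc i"] i w(1) d(2) subvec_carrier[OF d(1)] c0 by simp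
      qed (use w(1) in simp)
      then show False using w(2) by simp
    qed
    then show ?thesis using True unfolding t_def by simp
  next
    case False
    then have t: "t = 0" using t0 by simp
    have "dx \<bullet> (H *\<^sub>v dx) = 0" "dy \<bullet> (M *\<^sub>v dy) = 0" using q hx hy t by auto
    then have Hdx: "H *\<^sub>v dx = 0\<^sub>v n" and Mdy: "M *\<^sub>v dy = 0\<^sub>v m"
      using psd_zero[OF Hp d(1)] psd_zero[OF Mp d(2)] by auto
    have Adx: "A *\<^sub>v dx = 0\<^sub>v m" using sol_Ax[OF s] Mdy by simp
    define p where "p = subvec dx B"
    have p: "p \<in> carrier_vec (card B)" unfolding p_def by (rule subvec_carrier[OF d(1)])
    have E: "Evec n B l 0 p = dx" using sol_E[OF s] t unfolding t_def p_def by simp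
    have zB: "subvec (0\<^sub>v n) B = 0\<^sub>v (card B)"
      by (rule eq_vecI) (auto simp: subvec_n[OF Bn l lB] pickB_lt[OF Bn l lB])
    have Kp: "Kl H A M B l *\<^sub>v (vec_of_list [0] @\<^sub>v p @\<^sub>v 0\<^sub>v m) = vec_of_list [0] @\<^sub>v 0\<^sub>v (card B) @\<^sub>v 0\<^sub>v m"
    proof -
      have "Kl H A M B l *\<^sub>v (vec_of_list [0] @\<^sub>v p @\<^sub>v 0\<^sub>v m) =
         vec_of_list [(H *\<^sub>v Evec n B l 0 p + transpose_mat A *\<^sub>v 0\<^sub>v m) $ l] @\<^sub>v
         subvec (H *\<^sub>v Evec n B l 0 p + transpose_mat A *\<^sub>v 0\<^sub>v m) B @\<^sub>v
         (A *\<^sub>v Evec n B l 0 p - M *\<^sub>v 0\<^sub>v m)"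
        by (rule Kl_mult'[OF p]) simp
      also have "H *\<^sub>v Evec n B l 0 p + transpose_mat A *\<^sub>v 0\<^sub>v m = 0\<^sub>v n"
        unfolding E Hdx using A by auto
      also have "A *\<^sub>v Evec n B l 0 p - M *\<^sub>v 0\<^sub>v m = 0\<^sub>v m"
        unfolding E Adx using M by auto
      finally show ?thesis unfolding zB using l by simp
    qed
    have "vec_of_list [0] @\<^sub>v p @\<^sub>v 0\<^sub>v m = vec_of_list [0] @\<^sub>v 0\<^sub>v (card B) @\<^sub>v 0\<^sub>v m"
      by (rule Kl_inj, (rule app1_carrier, use p in simp)+, unfold Kp zero_app3 Kl_zero, rule refl)
    then have p0: "p = 0\<^sub>v (card B)" using p by (simp add: app1_eq append_vec_eq[OF p])
    have dx0: "dx = 0\<^sub>v n"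
    proof -
      have "Evec n B l 0 (0\<^sub>v (card B)) = 0\<^sub>v n"
      proof (rule eq_vecI)
        fix j assume "j < dim_vec (0\<^sub>v n :: real vec)"
        then have j: "j < n" by simp
        show "Evec n B l 0 (0\<^sub>v (card B)) $ j = 0\<^sub>v n $ j"
        proof (cases "j \<in> B")
          case True
          then have "card {a\<in>B. a < j} < card B" by (rule card_less_B)
          then show ?thesis using j True unfolding Evec_def by simp
        next
          case False then show ?thesis using j unfolding Evec_def by simp
        qed
      qed (simp add: Evec_def)
      then show ?thesis using E p0 by simp
    qed
    have AtB: "(transpose_mat A *\<^sub>v dy) $ pick B i = 0" if i: "i < card B" for i
    proof -
      have j: "pick B i < n" "pick B i \<in> B" using pickB_lt[OF Bn l lB i] pickB[OF Bn l lB i] by auto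
      have "dz $ pick B i = (H *\<^sub>v dx) $ pick B i - (transpose_mat A *\<^sub>v dy) $ pick B i"
        using arg_cong[OF sol_dz[OF s], of "\<lambda>x. x $ pick B i"] j H A d(1-2) by simp
      then show ?thesis using d(5)[OF j(2)] Hdx j by simp
    qed
    define w0 where "w0 = 0\<^sub>v (card B) @\<^sub>v dy"
    have w0: "w0 \<in> carrier_vec (card B + m)" unfolding w0_def using d(2) by simp
    have Kw0: "KB H A M B *\<^sub>v w0 = 0\<^sub>v (card B + m)"
    proof -
      have z0: "0\<^sub>v (card B) \<in> carrier_vec (card B)" by simp
      have "Kl H A M B l *\<^sub>v (vec_of_list [0] @\<^sub>v w0) =
         vec_of_list [(H *\<^sub>v Evec n B l 0 (0\<^sub>v (card B)) + transpose_mat A *\<^sub>v dy) $ l] @\<^sub>v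
         subvec (H *\<^sub>v Evec n B l 0 (0\<^sub>v (card B)) + transpose_mat A *\<^sub>v dy) B @\<^sub>v
         (A *\<^sub>v Evec n B l 0 (0\<^sub>v (card B)) - M *\<^sub>v dy)"
        unfolding w0_def by (rule Kl_mult'[OF z0 d(2)])
      also have "Evec n B l 0 (0\<^sub>v (card B)) = dx" using E p0 by simp
      also have "subvec (H *\<^sub>v dx + transpose_mat A *\<^sub>v dy) B = 0\<^sub>v (card B)"
        by (rule eq_vecI) (use Hdx H A d(1-2) AtB pickB_lt[OF Bn l lB] in \<open>auto simp: subvec_n[OF Bn l lB]\<close>)
      also have "A *\<^sub>v dx - M *\<^sub>v dy = 0\<^sub>v m" unfolding Adx Mdy by simp
      finally have "Kl H A M B l *\<^sub>v (vec_of_list [0] @\<^sub>v w0) =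
         vec_of_list [(H *\<^sub>v dx + transpose_mat A *\<^sub>v dy) $ l] @\<^sub>v 0\<^sub>v (card B + m)"
        unfolding zero_app2 .
      then show ?thesis unfolding Kl_KB'[OF w0] using KB_carrier' w0 by (simp add: app1_eq)
    qed
    have dy0: "dy \<noteq> 0\<^sub>v m"
    proof
      assume dy: "dy = 0\<^sub>v m"
      have "vec_of_list [dx $ l] @\<^sub>v subvec dx B @\<^sub>v (- dy) = 0\<^sub>v (1 + (card B + m))"
        unfolding dy zero_app3[symmetric] using t p0 unfolding t_def p_def by simp
      then have "vec_of_list [dz $ l] @\<^sub>v 0\<^sub>v (card B) @\<^sub>v 0\<^sub>v m = 0\<^sub>v (1 + (card B + m))"
        using sol_Kl[OF s] Kl_zero by simp
      from arg_cong[OF this, of "\<lambda>v. v $ 0"] have "dz $ l = 0" by simp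
      then show False using zl by simp
    qed
    have w0nz: "w0 \<noteq> 0\<^sub>v (card B + m)"
    proof
      assume h: "w0 = 0\<^sub>v (card B + m)"
      have "dy = 0\<^sub>v m"
      proof (rule eq_vecI)
        fix k assume "k < dim_vec (0\<^sub>v m :: real vec)"
        then have k: "k < m" by simp
        show "dy $ k = 0\<^sub>v m $ k" using arg_cong[OF h, of "\<lambda>v. v $ (card B + k)"] k d(2)
          unfolding w0_def by simp
      qed (use d(2) in simp)
      then show False using dy0 by simp
    qed
    have kerw0: "\<exists>c. v = c \<cdot>\<^sub>v w0" if v: "v \<in> carrier_vec (card B + m)" and Kv: "KB H A M B *\<^sub>v v = 0\<^sub>v (card B + m)" for v
    proof -
      obtain c where c: "vec_of_list [0] @\<^sub>v v = c \<cdot>\<^sub>v (vec_of_list [dx $ l] @\<^sub>v subvec dx B @\<^sub>v (- dy))"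
        using ker[OF s zl v Kv] by blast
      have "v = (- c) \<cdot>\<^sub>v w0"
      proof (rule eq_vecI)
        fix i assume "i < dim_vec ((- c) \<cdot>\<^sub>v w0)"
        then have i: "i < card B + m" using w0 by simp
        show "v $ i = ((- c) \<cdot>\<^sub>v w0) $ i"
          using arg_cong[OF c, of "\<lambda>x. x $ Suc i"] i v d(2) p0 unfolding p_def w0_def
          by (cases "i < card B") (auto simp: subvec_carrier[OF d(1)])
      qed (use v w0 in simp)
      then show ?thesis by blast
    qed
    have ev: "eigenvector (KB H A M B) w0 0"
      unfolding eigenvector_def using KB_carrier' w0 w0nz Kw0 zero_smult_vec'[OF w0] by simp
    have det0: "det (KB H A M B) = 0"
      using det_0_iff_vec_prod_zero_field[OF KB_carrier'] w0 w0nz Kw0 by blast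
    have ord: "order 0 (char_poly (KB H A M B)) = 1"
      by (rule mult_one[OF KB_carrier' KB_sym' w0 w0nz Kw0 kerw0])
    show ?thesis using det0 t p0 ord ev unfolding t_def p_def w0_def by simp
  qed
qed

end


theorem proposition4:
  fixes n m :: nat and H M A :: "real mat" and l :: nat and B N :: "nat set" and zl :: real
  assumes H: "sym_psd n H" and M: "sym_psd m M" and A: "A \<in> carrier_mat m n"
    and l: "l < n" and BN: "B \<subseteq> {0..<n}" "N \<subseteq> {0..<n}"
    and disj: "l \<notin> B" "l \<notin> N" "B \<inter> N = {}"
    and union: "B \<union> {l} \<union> N = {0..<n}"
    and Kl_nonsing: "det (Kl H A M B l) \<noteq> 0"
    and zl: "zl \<ge> 0"
  shows
   "(zl = 0 \<longrightarrow>
      (\<forall>dx dy dz. sys n m H A M B N dx dy dz \<and> dz $ l = zl \<longrightarrow>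
         dx $ l = 0 \<and> subvec dx B = 0\<^sub>v (card B) \<and> dy = 0\<^sub>v m \<and> subvec dz N = 0\<^sub>v (card N)))
    \<and>
    (zl > 0 \<longrightarrow>
      (\<forall>dx dy dz dx' dy' dz'. sys n m H A M B N dx dy dz \<and> dz $ l = zl \<and>
          sys n m H A M B N dx' dy' dz' \<and> dz' $ l = zl \<longrightarrow>
         dx $ l = dx' $ l \<and> subvec dx B = subvec dx' B \<and> dy = dy' \<and> subvec dz N = subvec dz' N)
      \<and>
      (\<forall>dx dy dz. sys n m H A M B N dx dy dz \<and> dz $ l = zl \<longrightarrow>
         Kl H A M B l *\<^sub>v (vec_of_list [dx $ l] @\<^sub>v subvec dx B @\<^sub>v (- dy))
           = vec_of_list [zl] @\<^sub>v 0\<^sub>v (card B) @\<^sub>v 0\<^sub>v m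
         \<and> subvec dz N = (dx $ l) \<cdot>\<^sub>v subvec (col H l) N
              + transpose_mat (submatrix H B N) *\<^sub>v subvec dx B
              - transpose_mat (submatrix A UNIV N) *\<^sub>v dy
         \<and> ((det (KB H A M B) \<noteq> 0 \<and> dx $ l > 0) \<or>
            (det (KB H A M B) = 0 \<and> dx $ l = 0 \<and> subvec dx B = 0\<^sub>v (card B) \<and>
             order 0 (char_poly (KB H A M B)) = 1 \<and>
             eigenvector (KB H A M B) (0\<^sub>v (card B) @\<^sub>v dy) 0))))"
proof -
  note ctx = H M A l BN(1) BN(2) disj(1) disj(2) disj(3) union Kl_nonsing
  have subvec_zero: "subvec (0\<^sub>v n :: real vec) S = 0\<^sub>v (card S)" if S: "S \<subseteq> {0..<n}" for S :: "nat set"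
  proof -
    have fS: "finite S" using S finite_subset by blast
    have cS: "{i. i < n \<and> i \<in> S} = S" using S by auto
    show ?thesis unfolding subvec_def index_zero_vec(2) cS
    proof (rule eq_vecI)
      fix i assume "i < dim_vec (0\<^sub>v (card S) :: real vec)"
      then have i: "i < card S" by simp
      have "pick S i \<in> S" using pick_in_set i by blast
      then have "pick S i < n" using S by auto
      then show "vec (card S) (\<lambda>i. 0\<^sub>v n $ pick S i) $ i = 0\<^sub>v (card S) $ i" using i by simp
    qed simp
  qed
  have part1: "zl = 0 \<longrightarrow>
      (\<forall>dx dy dz. sys n m H A M B N dx dy dz \<and> dz $ l = zl \<longrightarrow>
         dx $ l = 0 \<and> subvec dx B = 0\<^sub>v (card B) \<and> dy = 0\<^sub>v m \<and> subvec dz N = 0\<^sub>v (card N))"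
  proof (intro impI allI)
    fix dx dy dz assume z: "zl = 0" and h: "sys n m H A M B N dx dy dz \<and> dz $ l = zl"
    have "dz $ l = (0\<^sub>v n :: real vec) $ l" using h z l by simp
    then have "dx = 0\<^sub>v n \<and> dy = 0\<^sub>v m \<and> dz = 0\<^sub>v n"
      using unique[OF ctx _ sys_zero[OF ctx]] h by blast
    then show "dx $ l = 0 \<and> subvec dx B = 0\<^sub>v (card B) \<and> dy = 0\<^sub>v m \<and> subvec dz N = 0\<^sub>v (card N)"
      using subvec_zero[OF BN(1)] subvec_zero[OF BN(2)] l by simp
  qed
  have part2: "zl > 0 \<longrightarrow>
      (\<forall>dx dy dz dx' dy' dz'. sys n m H A M B N dx dy dz \<and> dz $ l = zl \<and>
          sys n m H A M B N dx' dy' dz' \<and> dz' $ l = zl \<longrightarrow>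
         dx $ l = dx' $ l \<and> subvec dx B = subvec dx' B \<and> dy = dy' \<and> subvec dz N = subvec dz' N)
      \<and>
      (\<forall>dx dy dz. sys n m H A M B N dx dy dz \<and> dz $ l = zl \<longrightarrow>
         Kl H A M B l *\<^sub>v (vec_of_list [dx $ l] @\<^sub>v subvec dx B @\<^sub>v (- dy))
           = vec_of_list [zl] @\<^sub>v 0\<^sub>v (card B) @\<^sub>v 0\<^sub>v m
         \<and> subvec dz N = (dx $ l) \<cdot>\<^sub>v subvec (col H l) N
              + transpose_mat (submatrix H B N) *\<^sub>v subvec dx B
              - transpose_mat (submatrix A UNIV N) *\<^sub>v dy
         \<and> ((det (KB H A M B) \<noteq> 0 \<and> dx $ l > 0) \<or>
            (det (KB H A M B) = 0 \<and> dx $ l = 0 \<and> subvec dx B = 0\<^sub>v (card B) \<and>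
             order 0 (char_poly (KB H A M B)) = 1 \<and>
             eigenvector (KB H A M B) (0\<^sub>v (card B) @\<^sub>v dy) 0)))"
  proof (intro impI conjI)
    show "\<forall>dx dy dz dx' dy' dz'. sys n m H A M B N dx dy dz \<and> dz $ l = zl \<and>
          sys n m H A M B N dx' dy' dz' \<and> dz' $ l = zl \<longrightarrow>
         dx $ l = dx' $ l \<and> subvec dx B = subvec dx' B \<and> dy = dy' \<and> subvec dz N = subvec dz' N"
    proof (intro allI impI)
      fix dx dy dz dx' dy' dz'
      assume "sys n m H A M B N dx dy dz \<and> dz $ l = zl \<and> sys n m H A M B N dx' dy' dz' \<and> dz' $ l = zl"
      then have "dx = dx' \<and> dy = dy' \<and> dz = dz'" using unique[OF ctx] by metis
      then show "dx $ l = dx' $ l \<and> subvec dx B = subvec dx' B \<and> dy = dy' \<and> subvec dz N = subvec dz' N"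
        by simp
    qed
  next
    assume zp: "zl > 0"
    show "\<forall>dx dy dz. sys n m H A M B N dx dy dz \<and> dz $ l = zl \<longrightarrow>
         Kl H A M B l *\<^sub>v (vec_of_list [dx $ l] @\<^sub>v subvec dx B @\<^sub>v (- dy))
           = vec_of_list [zl] @\<^sub>v 0\<^sub>v (card B) @\<^sub>v 0\<^sub>v m
         \<and> subvec dz N = (dx $ l) \<cdot>\<^sub>v subvec (col H l) N
              + transpose_mat (submatrix H B N) *\<^sub>v subvec dx B
              - transpose_mat (submatrix A UNIV N) *\<^sub>v dy
         \<and> ((det (KB H A M B) \<noteq> 0 \<and> dx $ l > 0) \<or>
            (det (KB H A M B) = 0 \<and> dx $ l = 0 \<and> subvec dx B = 0\<^sub>v (card B) \<and>
             order 0 (char_poly (KB H A M B)) = 1 \<and>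
             eigenvector (KB H A M B) (0\<^sub>v (card B) @\<^sub>v dy) 0))"
    proof (intro allI impI)
      fix dx dy dz
      assume h: "sys n m H A M B N dx dy dz \<and> dz $ l = zl"
      then have s: "sys n m H A M B N dx dy dz" and e: "dz $ l = zl" by auto
      have K: "Kl H A M B l *\<^sub>v (vec_of_list [dx $ l] @\<^sub>v subvec dx B @\<^sub>v (- dy))
           = vec_of_list [zl] @\<^sub>v 0\<^sub>v (card B) @\<^sub>v 0\<^sub>v m"
        using sol_Kl[OF ctx s] e by simp
      have D: "subvec dz N = (dx $ l) \<cdot>\<^sub>v subvec (col H l) N
              + transpose_mat (submatrix H B N) *\<^sub>v subvec dx B
              - transpose_mat (submatrix A UNIV N) *\<^sub>v dy"
        by (rule dzN[OF ctx s])
      have F: "(det (KB H A M B) \<noteq> 0 \<and> dx $ l > 0) \<or>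
            (det (KB H A M B) = 0 \<and> dx $ l = 0 \<and> subvec dx B = 0\<^sub>v (card B) \<and>
             order 0 (char_poly (KB H A M B)) = 1 \<and>
             eigenvector (KB H A M B) (0\<^sub>v (card B) @\<^sub>v dy) 0)"
        by (rule final[OF ctx s]) (use e zp in simp)
      show "Kl H A M B l *\<^sub>v (vec_of_list [dx $ l] @\<^sub>v subvec dx B @\<^sub>v (- dy))
           = vec_of_list [zl] @\<^sub>v 0\<^sub>v (card B) @\<^sub>v 0\<^sub>v m
         \<and> subvec dz N = (dx $ l) \<cdot>\<^sub>v subvec (col H l) N
              + transpose_mat (submatrix H B N) *\<^sub>v subvec dx B
              - transpose_mat (submatrix A UNIV N) *\<^sub>v dy
         \<and> ((det (KB H A M B) \<noteq> 0 \<and> dx $ l > 0) \<or>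
            (det (KB H A M B) = 0 \<and> dx $ l = 0 \<and> subvec dx B = 0\<^sub>v (card B) \<and>
             order 0 (char_poly (KB H A M B)) = 1 \<and>
             eigenvector (KB H A M B) (0\<^sub>v (card B) @\<^sub>v dy) 0))"
        using K D F by blast
    qed
  qed
  from part1 part2 show ?thesis by blast
qed

end
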